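(* The suboperad of $\mathrm{CNCB}$ generated by $T_{bbb}$ and $T_{bbu}$ is isomorphic to the free (nonsymmetric) operad generated by two generators of arity $2$.
   Context: For $n\ge2$, a bicoloured noncrossing configuration (BNC) of size $n$ is a regular polygon with vertices $1,\dots,n+1$ clockwise, together with disjoint sets of blue and red arcs among the arcs $(i,j)$, $1\le i<j\le n+1$. The arcs $(i,i+1)$ are the edges ($i$th edge), $(1,n+1)$ is the base, and the others are diagonals. Coloured arcs are pairwise noncrossing ($(i,j),(k,l)$ cross iff $i<k<j<l$ or $k<i<l<j$), and red arcs are diagonals. There is one BNC of size $1$, a blue segment, which is the unit. The operad $\mathrm{CNCB}$ has the BNCs as elements (arity = size). Its composition $\mathfrak C\circ_i\mathfrak D$ ($\mathfrak C$ of size $n$, $\mathfrak D$ of size $m$) glues the base of $\mathfrak D$ on the $i$th edge of $\mathfrak C$. Arcs $(a,b)$ of $\mathfrak C$ become $(\sigma(a),\sigma(b))$ with $\sigma(v)=v$ for $v\le i$ and $v+m-1$ otherwise, and arcs $(a,b)$ of $\mathfrak D$ become $(a+i-1,b+i-1)$, keeping colours. The exception is the arc $(i,i+m)$, which is red if the $i$th edge of $\mathfrak C$ and the base of $\mathfrak D$ are both uncoloured, blue if both are blue, and uncoloured otherwise. BNCs of size $2$ are triangles with vertices $1,2,3$ (no diagonals). For $x,y,z\in\{b,u\}$, $T_{xyz}$ denotes the triangle whose first edge $(1,2)$ has colour $x$, whose base $(1,3)$ has colour $y$, and whose second edge $(2,3)$ has colour $z$, where $b$ = blue and $u$ = uncoloured.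 The suboperad generated by a set is the smallest suboperad containing it. *)

theory Defs
  imports Main
begin

text \<open>A bicoloured noncrossing configuration is represented as a triple
  (n, B, R): its size n, its set of blue arcs B and its set of red arcs R.
  Arcs are pairs (i,j) with 1 \<le> i < j \<le> n+1.\<close>

type_synonym bnc = "nat \<times> (nat \<times> nat) set \<times> (nat \<times> nat) set"

definition bnc_size :: "bnc \<Rightarrow> nat" where
  "bnc_size C = fst C"

definition bnc_blue :: "bnc \<Rightarrow> (nat \<times> nat) set" where
  "bnc_blue C = fst (snd C)"

definition bnc_red :: "bnc \<Rightarrow> (nat \<times> nat) set" where
  "bnc_red C = snd (snd C)"

definition is_arc :: "nat \<Rightarrow> nat \<times> nat \<Rightarrow> bool" where
  "is_arc n a \<longleftrightarrow> 1 \<le> fst a \<and> fst a < snd a \<and> snd a \<le> n + 1"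

definition is_diagonal :: "nat \<Rightarrow> nat \<times> nat \<Rightarrow> bool" where
  "is_diagonal n a \<longleftrightarrow> is_arc n a \<and> snd a \<noteq> fst a + 1 \<and> a \<noteq> (1, n + 1)"

definition crosses :: "nat \<times> nat \<Rightarrow> nat \<times> nat \<Rightarrow> bool" where
  "crosses a b \<longleftrightarrow> (case a of (i, j) \<Rightarrow> case b of (k, l) \<Rightarrow>
      (i < k \<and> k < j \<and> j < l) \<or> (k < i \<and> i < l \<and> l < j))"

definition bnc_unit :: bnc where
  "bnc_unit = (1, {(1, 2)}, {})"

definition is_bnc :: "bnc \<Rightarrow> bool" where
  "is_bnc C \<longleftrightarrow>
     (C = bnc_unit) \<or>
     (bnc_size C \<ge> 2 \<and>
      (\<forall>a \<in> bnc_blue C. is_arc (bnc_size C) a) \<and>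
      (\<forall>a \<in> bnc_red C. is_diagonal (bnc_size C) a) \<and>
      bnc_blue C \<inter> bnc_red C = {} \<and>
      (\<forall>a \<in> bnc_blue C \<union> bnc_red C. \<forall>b \<in> bnc_blue C \<union> bnc_red C. \<not> crosses a b))"

text \<open>Partial composition C \<circ>_i D (glue the base of D on the i-th edge of C).\<close>
definition bnc_comp :: "bnc \<Rightarrow> nat \<Rightarrow> bnc \<Rightarrow> bnc" where
  "bnc_comp C i D =
    (let n = bnc_size C; m = bnc_size D;
         \<sigma> = (\<lambda>v::nat. if v \<le> i then v else v + m - 1);
         sa = (\<lambda>(a, b). (\<sigma> a, \<sigma> b));
         sh = (\<lambda>(a::nat, b::nat). (a + i - 1, b + i - 1));
         eB = ((i, i + 1) \<in> bnc_blue C);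
         eR = ((i, i + 1) \<in> bnc_red C);
         bB = ((1, m + 1) \<in> bnc_blue D);
         bR = ((1, m + 1) \<in> bnc_red D);
         e_unc = (\<not> eB \<and> \<not> eR);
         b_unc = (\<not> bB \<and> \<not> bR)
     in (n + m - 1,
         sa ` (bnc_blue C - {(i, i + 1)}) \<union> sh ` (bnc_blue D - {(1, m + 1)})
           \<union> (if eB \<and> bB then {(i, i + m)} else {}),
         sa ` (bnc_red C - {(i, i + 1)}) \<union> sh ` (bnc_red D - {(1, m + 1)})
           \<union> (if e_unc \<and> b_unc then {(i, i + m)} else {})))"

text \<open>Triangles T_xyz: first edge (1,2) colour x, base (1,3) colour y,
  second edge (2,3) colour z.\<close>
definition T_bbb :: bnc where
  "T_bbb = (2, {(1, 2), (1, 3), (2, 3)}, {})"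

definition T_bbu :: bnc where
  "T_bbu = (2, {(1, 2), (1, 3)}, {})"

inductive_set gen_subop :: "bnc set \<Rightarrow> bnc set" for G where
  gen_unit: "bnc_unit \<in> gen_subop G"
| gen_gen: "g \<in> G \<Longrightarrow> g \<in> gen_subop G"
| gen_comp: "\<lbrakk>C \<in> gen_subop G; D \<in> gen_subop G; 1 \<le> i; i \<le> bnc_size C\<rbrakk>
              \<Longrightarrow> bnc_comp C i D \<in> gen_subop G"

text \<open>The free nonsymmetric operad on two generators of arity 2: planar binary
  trees whose internal nodes are labelled by one of the two generators
  (encoded by a boolean); the leaf is the unit; composition grafts at a leaf.\<close>
datatype free2 = Leaf | Node bool free2 free2

fun leaves :: "free2 \<Rightarrow> nat" where
  "leaves Leaf = 1"
| "leaves (Node g l r) = leaves l + leaves r"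

fun graft :: "free2 \<Rightarrow> nat \<Rightarrow> free2 \<Rightarrow> free2" where
  "graft Leaf i t = t"
| "graft (Node g l r) i t =
     (if i \<le> leaves l then Node g (graft l i t) r
      else Node g l (graft r (i - leaves l) t))"

end

theory Submission
  imports Defs
begin

fun inner :: "free2 \<Rightarrow> nat \<Rightarrow> (nat \<times> nat) set" where
  "inner Leaf a = {}"
| "inner (Node g l r) a = inner l a \<union> inner r (a + leaves l) \<union> {(a, a + leaves l)}
     \<union> (if g then {(a + leaves l, a + leaves l + leaves r)} else {})"

definition phi :: "free2 \<Rightarrow> bnc" where
  "phi t = (leaves t, insert (1, 1 + leaves t) (inner t 1), {})"

definition sg :: "nat \<Rightarrow> nat \<Rightarrow> nat \<Rightarrow> nat" where
  "sg c m v = (if v \<le> c then v else v + m - 1)"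

definition shf :: "nat \<Rightarrow> nat \<times> nat \<Rightarrow> nat \<times> nat" where
  "shf d p = (fst p + d, snd p + d)"

lemma leaves_pos: "leaves t \<ge> 1"
  by (induction t) auto

lemma leaves_graft: "leaves (graft s i t) = leaves s + leaves t - 1"
proof -
  have h: "leaves t \<ge> 1" by (rule leaves_pos)
  then show ?thesis by (induction s arbitrary: i) auto
qed

lemma inner_bounds: "p \<in> inner t a \<Longrightarrow> a \<le> fst p \<and> fst p < snd p \<and> snd p \<le> a + leaves t \<and> snd p < fst p + leaves t"
proof (induction t arbitrary: a p)
  case Leaf then show ?case by simp
next
  case (Node g l r)
  have "leaves l \<ge> 1" "leaves r \<ge> 1" using leaves_pos by auto
  with Node show ?case by (auto split: if_splits dest!: Node.IH)
qed

lemma shf_pair[simp]: "shf d (x, y) = (x + d, y + d)"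
  by (simp add: shf_def)

lemma inner_shift: "inner t (a + d) = shf d ` inner t a"
proof (induction t arbitrary: a)
  case Leaf then show ?case by simp
next
  case (Node g l r)
  have e: "inner r (a + d + leaves l) = shf d ` inner r (a + leaves l)"
    using Node.IH(2)[of "a + leaves l"] by (simp add: add_ac)
  show ?case using Node.IH(1)[of a] e by (simp add: image_Un add_ac)
qed

definition sig :: "nat \<Rightarrow> nat \<Rightarrow> nat \<times> nat \<Rightarrow> nat \<times> nat" where
  "sig c m p = (sg c m (fst p), sg c m (snd p))"

lemma sig_id: "fst p \<le> c \<Longrightarrow> snd p \<le> c \<Longrightarrow> sig c m p = p"
  by (simp add: sig_def sg_def)

lemma sig_hi: "m \<ge> 1 \<Longrightarrow> c < fst p \<Longrightarrow> c < snd p \<Longrightarrow> sig c m p = shf (m - 1) p"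
  by (simp add: sig_def sg_def shf_def)

lemma inner_graft:
  assumes "1 \<le> i" "i \<le> leaves s"
  shows "inner (graft s i t) a = sig (a + i - 1) (leaves t) ` inner s a \<union> inner t (a + i - 1)"
  using assms
proof (induction s arbitrary: i a)
  case Leaf then show ?case by simp
next
  case (Node g l r)
  define L where "L = leaves l"
  define R where "R = leaves r"
  define m where "m = leaves t"
  define c where "c = a + i - 1"
  have m1: "m \<ge> 1" "L \<ge> 1" "R \<ge> 1" using leaves_pos by (auto simp: m_def L_def R_def)
  show ?case
  proof (cases "i \<le> L")
    case True
    have IH: "inner (graft l i t) a = sig c m ` inner l a \<union> inner t c"
      using Node.IH(1)[of i a] Node.prems True by (simp add: L_def c_def m_def)
    have "sig c m ` inner r (a + L) = shf (m - 1) ` inner r (a + L)"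
    proof (rule image_cong[OF refl])
      fix p assume "p \<in> inner r (a + L)"
      from inner_bounds[OF this] show "sig c m p = shf (m - 1) p"
        using True Node.prems by (intro sig_hi[OF m1(1)]) (auto simp: c_def)
    qed
    also have "\<dots> = inner r (a + (L + m - 1))"
      using inner_shift[of r "a + L" "m - 1"] m1 by (simp add: add_ac)
    finally have r: "sig c m ` inner r (a + L) = inner r (a + (L + m - 1))" .
    have s1: "sig c m (a, a + L) = (a, a + (L + m - 1))"
      using True Node.prems m1 unfolding sig_def sg_def c_def by auto
    have s2: "sig c m (a + L, a + L + R) = (a + (L + m - 1), a + (L + m - 1) + R)"
      using True Node.prems m1 unfolding sig_def sg_def c_def by auto
    have lg: "leaves (graft l i t) = L + m - 1" by (simp add: leaves_graft L_def m_def)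
    have "graft (Node g l r) i t = Node g (graft l i t) r" using True by (simp add: L_def)
    then have "inner (graft (Node g l r) i t) a = inner (graft l i t) a \<union> inner r (a + (L + m - 1))
       \<union> {(a, a + (L + m - 1))} \<union> (if g then {(a + (L + m - 1), a + (L + m - 1) + R)} else {})"
      by (simp add: lg R_def)
    also have "\<dots> = sig c m ` inner (Node g l r) a \<union> inner t c"
      using IH r s1 s2 by (auto simp: image_Un L_def R_def)
    finally show ?thesis by (simp add: c_def m_def)
  next
    case False
    have IH: "inner (graft r (i - L) t) (a + L) = sig c m ` inner r (a + L) \<union> inner t c"
      using Node.IH(2)[of "i - L" "a + L"] Node.prems False by (simp add: L_def c_def m_def)
    have l: "sig c m ` inner l a = inner l a"
    proof -
      have "sig c m ` inner l a = id ` inner l a"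
      proof (rule image_cong[OF refl])
        fix p assume "p \<in> inner l a"
        from inner_bounds[OF this] show "sig c m p = id p"
          using False Node.prems by (simp only: id_apply, intro sig_id) (auto simp: c_def L_def)
      qed
      then show ?thesis by simp
    qed
    have s1: "sig c m (a, a + L) = (a, a + L)"
      using False Node.prems m1 unfolding sig_def sg_def c_def by auto
    have s2: "sig c m (a + L, a + L + R) = (a + L, a + L + (R + m - 1))"
      using False Node.prems m1 unfolding sig_def sg_def c_def L_def R_def by auto
    have lg: "leaves (graft r (i - L) t) = R + m - 1" by (simp add: leaves_graft R_def m_def)
    have "graft (Node g l r) i t = Node g l (graft r (i - L) t)" using False by (simp add: L_def)
    then have "inner (graft (Node g l r) i t) a = inner l a \<union> inner (graft r (i - L) t) (a + L)
       \<union> {(a, a + L)} \<union> (if g then {(a + L, a + L + (R + m - 1))} else {})"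
      by (simp add: lg[unfolded L_def] L_def)
    also have "\<dots> = sig c m ` inner (Node g l r) a \<union> inner t c"
      using IH l s1 s2 by (auto simp: image_Un L_def R_def)
    finally show ?thesis by (simp add: c_def m_def)
  qed
qed

lemma img_minus: "f ` (A - {e}) \<union> (if e \<in> A then {f e} else {}) = f ` A"
  by auto

lemma phi_comp:
  assumes "1 \<le> i" "i \<le> leaves s"
  shows "phi (graft s i t) = bnc_comp (phi s) i (phi t)"
proof -
  define n where "n = leaves s"
  define m where "m = leaves t"
  have m1: "m \<ge> 1" "n \<ge> 1" using leaves_pos by (auto simp: m_def n_def)
  have sa: "(\<lambda>(a, b). (if a \<le> i then a else a + m - 1, if b \<le> i then b else b + m - 1)) = sig i m"
    by (auto simp: sig_def sg_def)
  have sh: "(\<lambda>(a::nat, b::nat). (a + i - 1, b + i - 1)) = shf (i - 1)"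
    using assms(1) by (auto simp: shf_def)
  have nb: "(1, m + 1) \<notin> inner t 1" using inner_bounds[of "(1, m+1)" t 1] by (auto simp: m_def)
  have e: "sig i m (i, i + 1) = (i, i + m)" using m1 by (simp add: sig_def sg_def)
  have b1: "sig i m (1, 1 + n) = (1, 1 + (n + m - 1))" using m1 assms by (simp add: sig_def sg_def n_def)
  have it: "inner t i = shf (i - 1) ` inner t 1" using inner_shift[of t 1 "i - 1"] assms(1) by simp
  have ig: "inner (graft s i t) 1 = sig i m ` inner s 1 \<union> inner t i"
    using inner_graft[OF assms, of t 1] by (simp add: m_def)
  let ?Bs = "insert (1, 1 + n) (inner s 1)"
  have blue: "sig i m ` (?Bs - {(i, i + 1)}) \<union> shf (i - 1) ` (insert (1, 1 + m) (inner t 1) - {(1, m + 1)})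
      \<union> (if (i, i + 1) \<in> ?Bs \<and> (1, m + 1) \<in> insert (1, 1 + m) (inner t 1) then {(i, i + m)} else {})
      = insert (1, 1 + (n + m - 1)) (inner (graft s i t) 1)"
  proof -
    have c: "(1, m + 1) \<in> insert (1, 1 + m) (inner t 1)" by simp
    have d: "insert (1, 1 + m) (inner t 1) - {(1, m + 1)} = inner t 1" using nb by (auto simp: add_ac)
    have f: "sig i m ` (?Bs - {(i, i + 1)}) \<union> (if (i, i + 1) \<in> ?Bs then {(i, i + m)} else {}) = sig i m ` ?Bs"
    proof -
      have "sig i m ` (?Bs - {(i, i + 1)}) \<union> (if (i, i + 1) \<in> ?Bs then {sig i m (i, i + 1)} else {}) = sig i m ` ?Bs"
        by (rule img_minus)
      then show ?thesis by (simp only: e)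
    qed
    have "sig i m ` (?Bs - {(i, i + 1)}) \<union> shf (i - 1) ` (insert (1, 1 + m) (inner t 1) - {(1, m + 1)})
      \<union> (if (i, i + 1) \<in> ?Bs \<and> (1, m + 1) \<in> insert (1, 1 + m) (inner t 1) then {(i, i + m)} else {})
      = sig i m ` (?Bs - {(i, i + 1)}) \<union> shf (i - 1) ` inner t 1
      \<union> (if (i, i + 1) \<in> ?Bs then {(i, i + m)} else {})"
      by (simp only: c d simp_thms)
    also have "\<dots> = sig i m ` ?Bs \<union> inner t i" using f it by blast
    also have "\<dots> = insert (1, 1 + (n + m - 1)) (inner (graft s i t) 1)"
      using b1 ig by auto
    finally show ?thesis .
  qed
  show ?thesis
    unfolding bnc_comp_def phi_def Let_def bnc_size_def bnc_blue_def bnc_red_def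
    apply (simp only: fst_conv snd_conv sa[unfolded m_def] sh)
    apply (simp only: blue[unfolded n_def m_def] leaves_graft)
    apply simp
    done
qed

lemma node_from_a:
  assumes "(a, y) \<in> inner (Node g l r) a"
  shows "y \<le> a + leaves l"
proof -
  have "leaves l \<ge> 1" by (rule leaves_pos)
  then show ?thesis using assms inner_bounds[of "(a, y)" l a] inner_bounds[of "(a, y)" r "a + leaves l"]
    by (auto split: if_splits)
qed

lemma node_l:
  "inner l a = {p \<in> inner (Node g l r) a. snd p \<le> a + leaves l \<and> p \<noteq> (a, a + leaves l)}"
proof -
  have "leaves l \<ge> 1" "leaves r \<ge> 1" by (rule leaves_pos)+
  then show ?thesis
    using inner_bounds[of _ l a] inner_bounds[of _ r "a + leaves l"]
    by (auto split: if_splits) fastforce+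
qed

lemma node_r:
  "inner r (a + leaves l) = {p \<in> inner (Node g l r) a. a + leaves l \<le> fst p \<and>
      p \<noteq> (a + leaves l, a + leaves l + leaves r)}"
proof -
  have "leaves l \<ge> 1" "leaves r \<ge> 1" by (rule leaves_pos)+
  then show ?thesis
    using inner_bounds[of _ l a] inner_bounds[of _ r "a + leaves l"]
    by (auto split: if_splits) fastforce+
qed

lemma node_g:
  "g \<longleftrightarrow> (a + leaves l, a + leaves l + leaves r) \<in> inner (Node g l r) a"
proof -
  have "leaves l \<ge> 1" "leaves r \<ge> 1" by (rule leaves_pos)+
  then show ?thesis
    using inner_bounds[of "(a + leaves l, a + leaves l + leaves r)" l a]
      inner_bounds[of "(a + leaves l, a + leaves l + leaves r)" r "a + leaves l"]
    by auto
qed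

lemma inner_inj: "leaves s = leaves t \<Longrightarrow> inner s a = inner t a \<Longrightarrow> s = t"
proof (induction s arbitrary: t a)
  case Leaf
  then show ?case
  proof (cases t)
    case (Node g l r)
    then show ?thesis using Leaf leaves_pos[of l] leaves_pos[of r] by simp
  qed simp
next
  case (Node g l r)
  show ?case
  proof (cases t)
    case Leaf
    then show ?thesis using Node.prems leaves_pos[of l] leaves_pos[of r] by simp
  next
    case (Node g' l' r')
    note t = this
    have h0: "(a, a + leaves l) \<in> inner (Node g l r) a" by simp
    have "(a, a + leaves l) \<in> inner t a" using h0 Node.prems(2) by metis
    then have 1: "leaves l \<le> leaves l'" using node_from_a[of a "a + leaves l" g' l' r'] t by simp
    have "(a, a + leaves l') \<in> inner (Node g l r) a" using Node.prems t by simp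
    then have 2: "leaves l' \<le> leaves l" using node_from_a[of a "a + leaves l'" g l r] by simp
    have L: "leaves l = leaves l'" using 1 2 by simp
    have R: "leaves r = leaves r'" using L Node.prems t by simp
    have eqi: "inner (Node g l r) a = inner (Node g' l' r') a" using Node.prems(2) t by (simp only:)
    have "g \<longleftrightarrow> (a + leaves l', a + leaves l' + leaves r') \<in> inner (Node g l r) a"
      using node_g[of g a l r] unfolding L R .
    also have "\<dots> \<longleftrightarrow> g'" unfolding eqi by (rule node_g[symmetric])
    finally have g: "g = g'" .
    have "inner l a = {p \<in> inner (Node g l r) a. snd p \<le> a + leaves l' \<and> p \<noteq> (a, a + leaves l')}"
      using node_l[of l a g r] unfolding L .
    also have "\<dots> = inner l' a" unfolding eqi by (rule node_l[symmetric])
    finally have il: "inner l a = inner l' a" .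
    have "inner r (a + leaves l) = {p \<in> inner (Node g l r) a. a + leaves l' \<le> fst p \<and>
      p \<noteq> (a + leaves l', a + leaves l' + leaves r')}"
      using node_r[of r a l g] unfolding L R .
    also have "\<dots> = inner r' (a + leaves l')" unfolding eqi by (rule node_r[symmetric])
    finally have ir: "inner r (a + leaves l) = inner r' (a + leaves l)" unfolding L .
    show ?thesis using Node.IH(1)[OF L il] Node.IH(2)[OF R ir] g t by simp
  qed
qed

lemma phi_gen: "phi (Node g Leaf Leaf) \<in> gen_subop {T_bbb, T_bbu}"
  by (cases g) (auto simp: phi_def T_bbb_def T_bbu_def intro!: gen_subop.gen_gen)

lemma phi_in: "phi t \<in> gen_subop {T_bbb, T_bbu}"
proof (induction t)
  case Leaf
  have "phi Leaf = bnc_unit" by (simp add: phi_def bnc_unit_def)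
  then show ?case by (simp add: gen_subop.gen_unit)
next
  case (Node g l r)
  have e: "Node g l r = graft (graft (Node g Leaf Leaf) 2 r) 1 l" by simp
  have "phi (graft (Node g Leaf Leaf) 2 r) = bnc_comp (phi (Node g Leaf Leaf)) 2 (phi r)"
    by (rule phi_comp) auto
  moreover have "phi (graft (graft (Node g Leaf Leaf) 2 r) 1 l) = bnc_comp (phi (graft (Node g Leaf Leaf) 2 r)) 1 (phi l)"
    by (rule phi_comp) (auto simp: leaves_pos)
  ultimately have "phi (Node g l r) = bnc_comp (bnc_comp (phi (Node g Leaf Leaf)) 2 (phi r)) 1 (phi l)"
    using e by metis
  moreover have "bnc_comp (bnc_comp (phi (Node g Leaf Leaf)) 2 (phi r)) 1 (phi l) \<in> gen_subop {T_bbb, T_bbu}"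
  proof (rule gen_subop.gen_comp)
    show "bnc_comp (phi (Node g Leaf Leaf)) 2 (phi r) \<in> gen_subop {T_bbb, T_bbu}"
      by (rule gen_subop.gen_comp[OF phi_gen Node.IH(2)]) (auto simp: phi_def bnc_size_def)
    show "1 \<le> bnc_size (bnc_comp (phi (Node g Leaf Leaf)) 2 (phi r))"
      by (simp add: bnc_comp_def bnc_size_def Let_def phi_def)
  qed (auto simp: Node.IH(1))
  ultimately show ?case by simp
qed

lemma gen_in: "C \<in> gen_subop {T_bbb, T_bbu} \<Longrightarrow> C \<in> range phi"
proof (induction rule: gen_subop.induct)
  case gen_unit
  have "phi Leaf = bnc_unit" by (simp add: phi_def bnc_unit_def)
  then show ?case by (metis rangeI)
next
  case (gen_gen g)
  have "phi (Node True Leaf Leaf) = T_bbb" by (auto simp: phi_def T_bbb_def)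
  moreover have "phi (Node False Leaf Leaf) = T_bbu" by (auto simp: phi_def T_bbu_def)
  ultimately show ?case using gen_gen by (metis insertE rangeI singletonD)
next
  case (gen_comp C D i)
  then obtain s t where st: "C = phi s" "D = phi t" by blast
  have "i \<le> leaves s" using gen_comp st by (simp add: phi_def bnc_size_def)
  then have "phi (graft s i t) = bnc_comp C i D" using phi_comp[of i s t] gen_comp st by simp
  then show ?case by (metis rangeI)
qed

lemma phi_inj: "inj phi"
proof (rule injI)
  fix s t assume h: "phi s = phi t"
  then have L: "leaves s = leaves t" by (simp add: phi_def)
  have ns: "(1, 1 + leaves s) \<notin> inner s 1" using inner_bounds[of "(1, 1 + leaves s)" s 1] by auto
  have nt: "(1, 1 + leaves s) \<notin> inner t 1" using inner_bounds[of "(1, 1 + leaves s)" t 1] L by auto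
  have "insert (1, 1 + leaves s) (inner s 1) = insert (1, 1 + leaves s) (inner t 1)"
    using h L by (simp add: phi_def)
  then have "inner s 1 = inner t 1" using ns nt by (metis insert_ident)
  then show "s = t" using inner_inj L by blast
qed

theorem theorem3p3:
  shows "\<exists>\<phi> :: free2 \<Rightarrow> bnc.
           bij_betw \<phi> UNIV (gen_subop {T_bbb, T_bbu}) \<and>
           \<phi> Leaf = bnc_unit \<and>
           (\<forall>t. bnc_size (\<phi> t) = leaves t) \<and>
           (\<forall>s i t. 1 \<le> i \<and> i \<le> leaves s \<longrightarrow>
              \<phi> (graft s i t) = bnc_comp (\<phi> s) i (\<phi> t))"
proof (intro exI conjI allI impI)
  show "bij_betw phi UNIV (gen_subop {T_bbb, T_bbu})"
    unfolding bij_betw_def using phi_inj phi_in gen_in by blast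
  show "phi Leaf = bnc_unit" by (simp add: phi_def bnc_unit_def)
  show "bnc_size (phi t) = leaves t" for t by (simp add: phi_def bnc_size_def)
  show "phi (graft s i t) = bnc_comp (phi s) i (phi t)" if "1 \<le> i \<and> i \<le> leaves s" for s i t
    using phi_comp that by blast
qed

end
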